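(* For every integer $d\ge 0$ define $\Phi_d:(\mathbb{R}_{\ge 0})^d\to\mathbb{R}[x]$ recursively by \[ \Phi_d(t_0,\ldots,t_{d-1})=\begin{cases}1 & d=0,\\ x+t_0 & d=1,\\ (x-t_{d-2})^2\,\Phi_{d-2}(t_0,\ldots,t_{d-3})+t_{d-1}x & d\ge 2.\end{cases} \] Then for every $d\ge 0$, $\Phi_d$ maps $(\mathbb{R}_{\ge 0})^d$ into $\mathcal{C}_d$, $\Phi_d:(\mathbb{R}_{\ge0})^d\to\mathcal{C}_d$ is surjective, and $\Phi_d$ is generically injective: there is a subset $N\subseteq(\mathbb{R}_{\ge 0})^d$ of Lebesgue measure zero such that the restriction of $\Phi_d$ to $(\mathbb{R}_{\ge0})^d\setminus N$ is injective.
   Context: A polynomial $f\in\mathbb{R}[x]$ is called copositive if $f(x)\ge 0$ for all real $x\ge 0$. $F_d$ denotes the set of monic polynomials in $\mathbb{R}[x]$ of degree exactly $d$, and $\mathcal{C}_d=\{f\in F_d: f \text{ copositive}\}$. For $d=0$, $(\mathbb{R}_{\ge0})^0$ is a single point and $\mathcal{C}_0=\{1\}$. *)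

theory Defs
  imports "HOL-Analysis.Analysis" "HOL-Computational_Algebra.Polynomial"
begin

fun Phi :: "nat \<Rightarrow> (nat \<Rightarrow> real) \<Rightarrow> real poly" where
  "Phi 0 t = 1"
| "Phi (Suc 0) t = [:t 0, 1:]"
| "Phi (Suc (Suc n)) t = [:- t n, 1:] ^ 2 * Phi n t + monom (t (Suc n)) 1"

definition copositive :: "real poly \<Rightarrow> bool" where
  "copositive f \<longleftrightarrow> (\<forall>x::real. x \<ge> 0 \<longrightarrow> poly f x \<ge> 0)"

definition monic_deg :: "nat \<Rightarrow> real poly set" where
  "monic_deg d = {f. degree f = d \<and> lead_coeff f = 1}"

definition Cop :: "nat \<Rightarrow> real poly set" where
  "Cop d = {f \<in> monic_deg d. copositive f}"

definition nonneg_orthant :: "nat \<Rightarrow> (nat \<Rightarrow> real) set" where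
  "nonneg_orthant d = PiE {..<d} (\<lambda>_. {0..})"

end

theory Submission
  imports Defs
begin

lemma null_slice:
  fixes d i :: nat assumes "i < d"
  shows "PiE {..<d} (\<lambda>j. if j = i then {0::real} else UNIV) \<in> null_sets (PiM {..<d} (\<lambda>_. lborel))"
proof -
  interpret product_sigma_finite "\<lambda>_::nat. lborel :: real measure"
    by (simp add: product_sigma_finite_def lborel.sigma_finite_measure_axioms)
  have s: "PiE {..<d} (\<lambda>j. if j = i then {0::real} else UNIV) \<in> sets (PiM {..<d} (\<lambda>_. lborel))"
    by (rule sets_PiM_I_finite) (simp_all add: finite_lessThan)
  have "emeasure (PiM {..<d} (\<lambda>_. lborel)) (PiE {..<d} (\<lambda>j. if j = i then {0::real} else UNIV))
     = (\<Prod>j\<in>{..<d}. emeasure lborel (if j = i then {0::real} else UNIV))"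
    by (rule emeasure_PiM) auto
  also have "\<dots> = 0"
    using assms by (intro prod_zero) (auto intro!: bexI[of _ i])
  finally show ?thesis using s by (auto simp: null_sets_def)
qed

lemma null_N: fixes d :: nat shows
  "(\<Union>i\<in>{..<d}. PiE {..<d} (\<lambda>j. if j = i then {0::real} else UNIV)) \<in> null_sets (PiM {..<d} (\<lambda>_. lborel))"
  by (rule null_sets_UN') (auto intro: null_slice countable_finite)



lemma Phi_local: "(\<And>i. i < n \<Longrightarrow> t i = s i) \<Longrightarrow> Phi n t = Phi n s"
  by (induction n t rule: Phi.induct) auto

lemma poly_Phi_SS: "poly (Phi (Suc (Suc n)) t) x = (x - t n)^2 * poly (Phi n t) x + t (Suc n) * x"
  by (simp add: poly_monom)

lemma Phi_nonneg: "(\<And>i. i < n \<Longrightarrow> t i \<ge> 0) \<Longrightarrow> x \<ge> 0 \<Longrightarrow> poly (Phi n t) x \<ge> 0"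
proof (induction n t rule: Phi.induct)
  case (3 n t)
  have "poly (Phi n t) x \<ge> 0" using 3 by auto
  moreover have "t (Suc n) \<ge> 0" using 3 by auto
  ultimately show ?case using 3(3) by (simp add: poly_Phi_SS del: Phi.simps)
qed auto

lemma Phi_pos: "(\<And>i. i < n \<Longrightarrow> t i > 0) \<Longrightarrow> x > 0 \<Longrightarrow> poly (Phi n t) x > 0"
proof (induction n t rule: Phi.induct)
  case (3 n t)
  have "poly (Phi n t) x > 0" using 3 by auto
  moreover have "t (Suc n) > 0" using 3 by auto
  ultimately have "(x - t n)^2 * poly (Phi n t) x \<ge> 0" "t (Suc n) * x > 0" using 3(3) by auto
  then show ?case by (simp add: poly_Phi_SS del: Phi.simps)
qed auto

lemma monic_step:
  fixes g :: "real poly"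
  assumes "degree g = n" "lead_coeff g = 1"
  shows "degree ([:- a, 1:] ^ 2 * g + monom b 1) = n + 2 \<and> lead_coeff ([:- a, 1:] ^ 2 * g + monom b 1) = 1"
proof -
  have g0: "g \<noteq> 0" using assms by auto
  have d1: "degree ([:- a, 1:] ^ 2 * g) = n + 2"
    using g0 assms by (simp add: degree_mult_eq degree_power_eq)
  have l1: "lead_coeff ([:- a, 1:] ^ 2 * g) = 1"
    using assms by (simp add: lead_coeff_mult lead_coeff_power)
  have dm: "degree (monom b 1 :: real poly) < n + 2"
    by (rule le_less_trans[OF degree_monom_le]) simp
  have "degree ([:- a, 1:] ^ 2 * g + monom b 1) = n + 2"
    using d1 dm by (simp add: degree_add_eq_left)
  moreover have "coeff ([:- a, 1:] ^ 2 * g + monom b 1) (n+2) = 1"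
    using l1 d1 by (simp add: coeff_monom)
  ultimately show ?thesis by simp
qed

lemma Phi_monic: "degree (Phi n t) = n \<and> lead_coeff (Phi n t) = 1"
proof (induction n t rule: Phi.induct)
  case (3 n t)
  from monic_step[of "Phi n t" n "t n" "t (Suc n)"] 3 have
    "degree ([:- t n, 1:] ^ 2 * Phi n t + monom (t (Suc n)) 1) = n + 2 \<and> lead_coeff ([:- t n, 1:] ^ 2 * Phi n t + monom (t (Suc n)) 1) = 1" by blast
  then show ?case by (metis Phi.simps(3) add_2_eq_Suc')
qed auto

lemma Phi_inj:
  "(\<And>i. i < n \<Longrightarrow> t i > 0) \<Longrightarrow> (\<And>i. i < n \<Longrightarrow> s i > 0) \<Longrightarrow> Phi n t = Phi n s
    \<Longrightarrow> i < n \<Longrightarrow> t i = s i"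
proof (induction n t arbitrary: s i rule: Phi.induct)
  case (2 t)
  then show ?case by auto
next
  case (3 n t)
  let ?f = "Phi (Suc (Suc n)) t"
  define a where "a = t n"
  define b where "b = t (Suc n)"
  define a' where "a' = s n"
  define b' where "b' = s (Suc n)"
  have pos: "a > 0" "b > 0" "a' > 0" "b' > 0" using 3(2,3) by (auto simp: a_def b_def a'_def b'_def)
  have gp: "poly (Phi n t) x > 0" "poly (Phi n s) x > 0" if "x > 0" for x
    using Phi_pos[of n t x] Phi_pos[of n s x] 3(2,3) that by auto
  have ev: "poly ?f x = (x - a)^2 * poly (Phi n t) x + b * x"
       "poly ?f x = (x - a')^2 * poly (Phi n s) x + b' * x" for x
    unfolding a_def b_def a'_def b'_def
    by (simp only: poly_Phi_SS, simp only: 3(4) poly_Phi_SS)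
  have "b' * a \<le> b * a"
  proof -
    have "0 \<le> (a - a')^2 * poly (Phi n s) a" using gp(2)[OF pos(1)] by simp
    thus ?thesis using ev[of a] by simp
  qed
  moreover have "b * a' \<le> b' * a'"
  proof -
    have "0 \<le> (a' - a)^2 * poly (Phi n t) a'" using gp(1)[OF pos(3)] by simp
    thus ?thesis using ev[of a'] by simp
  qed
  ultimately have bb: "b = b'" using pos by (meson antisym mult_right_le_imp_le)
  have "(a - a')^2 * poly (Phi n s) a = 0" using ev[of a] bb by simp
  hence aa: "a = a'" using gp(2)[OF pos(1)] by simp
  have "[:- a, 1:] ^ 2 * Phi n t = [:- a, 1:] ^ 2 * Phi n s"
    using 3(4) bb aa by (simp add: a_def b_def a'_def b'_def)
  hence gg: "Phi n t = Phi n s" by (simp del: Phi.simps)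
  show ?case
  proof (cases "i < n")
    case True
    then show ?thesis using 3(1)[of s i] 3(2,3) gg by auto
  next
    case False
    then have "i = n \<or> i = Suc n" using 3(5) by auto
    then show ?thesis using aa bb by (auto simp: a_def b_def a'_def b'_def)
  qed
qed auto



lemma poly_nonneg_right:
  fixes p :: "real poly"
  assumes "\<And>x. x > a \<Longrightarrow> poly p x \<ge> 0"
  shows "poly p a \<ge> 0"
proof (rule tendsto_lowerbound)
  show "(poly p \<longlongrightarrow> poly p a) (at_right a)"
    by (intro tendsto_intros)
  show "\<forall>\<^sub>F x in at_right a. 0 \<le> poly p x"
    by (rule eventually_mono[OF eventually_at_right_less]) (use assms in auto)
  show "at_right a \<noteq> bot" by simp
qed

lemma double_root:
  fixes F :: "real poly"
  assumes "poly F a = 0" "poly (pderiv F) a = 0"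
  shows "\<exists>g. F = [:- a, 1:]^2 * g"
proof -
  obtain Q where Q: "F = [:- a, 1:] * Q" using assms(1) by (metis dvdE poly_eq_0_iff_dvd)
  have "pderiv F = [:- a, 1:] * pderiv Q + Q" unfolding Q pderiv_mult by (simp add: pderiv_pCons)
  hence "poly Q a = 0" using assms(2) by simp
  then obtain g where "Q = [:- a, 1:] * g" by (metis dvdE poly_eq_0_iff_dvd)
  hence "F = [:- a, 1:]^2 * g" using Q by (simp only: power2_eq_square mult.assoc)
  thus ?thesis by blast
qed




lemma touch:
  fixes f :: "real poly"
  assumes deg: "degree f = Suc (Suc n)" and lc: "lead_coeff f = 1" and cop: "copositive f"
  shows "\<exists>a b. a \<ge> 0 \<and> b \<ge> 0 \<and> (\<forall>x\<ge>0. b * x \<le> poly f x) \<and> poly f a = b * a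
          \<and> poly (pderiv f) a = b"
proof -
  obtain c h where f: "f = pCons c h" by (metis pCons_cases)
  have h0: "h \<noteq> 0" using deg f by auto
  have degh: "degree h = Suc n" using deg f h0 by simp
  have lch: "lead_coeff h = 1" using lc f h0 degh by simp
  have pf: "poly f x = c + x * poly h x" for x by (simp add: f)
  have pdf: "poly (pderiv f) x = poly h x + x * poly (pderiv h) x" for x
    by (simp add: f pderiv_pCons)
  have fnn: "poly f x \<ge> 0" if "x \<ge> 0" for x using cop that by (auto simp: copositive_def)
  have c0: "c \<ge> 0" using fnn[of 0] by (simp add: pf)
  have big: "\<exists>R. \<forall>x\<ge>R. poly h x \<ge> M + 1" for M
  proof -
    have e: "h - [:M:] = h + [:-M:]" by simp
    have d: "degree (h + [:-M:]) = Suc n" using degh by (subst degree_add_eq_left) auto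
    have "lead_coeff (h - [:M:]) = 1" unfolding e d using lch degh by simp
    then obtain R where "\<forall>x\<ge>R. poly (h - [:M:]) x \<ge> 1"
      using poly_pinfty_gt_lc[of "h - [:M:]"] by auto
    hence "\<forall>x\<ge>R. poly h x \<ge> M + 1" by (auto simp: algebra_simps)
    thus ?thesis by blast
  qed
  have pc: "continuous_on S (poly h)" for S
    using continuous_on_poly[OF continuous_on_id, of S h] by simp
  show ?thesis
  proof (cases "c = 0")
    case True
    obtain R where R: "\<forall>x\<ge>R. poly h x \<ge> poly h 0 + 1" using big by blast
    define R' where "R' = max R 0"
    obtain a where a: "a \<in> {0..R'}" "\<forall>y\<in>{0..R'}. poly h a \<le> poly h y"
      using continuous_attains_inf[OF compact_Icc _ pc, of 0 R'] by (auto simp: R'_def)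
    have amin: "poly h a \<le> poly h y" if "y \<ge> 0" for y
    proof (cases "y \<le> R'")
      case True thus ?thesis using a that by auto
    next
      case False
      hence "poly h y \<ge> poly h 0 + 1" using R by (auto simp: R'_def)
      moreover have "poly h a \<le> poly h 0" using a by (auto simp: R'_def)
      ultimately show ?thesis by simp
    qed
    have hpos: "poly h x \<ge> 0" if "x > 0" for x
    proof -
      have "0 \<le> x * poly h x" using fnn[of x] that True by (simp add: pf)
      thus ?thesis using that by (simp add: zero_le_mult_iff)
    qed
    have "poly h a \<ge> 0"
      using poly_nonneg_right[of a h] hpos a by auto
    moreover have pd: "poly (pderiv h) a * a = 0"
    proof (cases "a = 0")
      case False
      hence "a > 0" using a by auto
      have "poly (pderiv h) a = 0"
      proof (rule DERIV_local_min[OF poly_DERIV \<open>a > 0\<close>], intro allI impI)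
        fix y assume "\<bar>a - y\<bar> < a"
        thus "poly h a \<le> poly h y" using amin[of y] by auto
      qed
      thus ?thesis by simp
    qed simp
    moreover have "\<forall>x\<ge>0. poly h a * x \<le> poly f x"
    proof (intro allI impI)
      fix x :: real assume x: "x \<ge> 0"
      show "poly h a * x \<le> poly f x"
        using mult_right_mono[OF amin[OF x] x] True by (simp add: pf mult.commute)
    qed
    moreover have "poly f a = poly h a * a" using True by (simp add: pf)
    moreover have "poly (pderiv f) a = poly h a" using pd by (simp add: pdf mult.commute)
    ultimately show ?thesis using a
      by (intro exI[where x=a, OF exI[where x="poly h a"]]) auto
  next
    case False
    hence cpos: "c > 0" using c0 by simp
    define M where "M = c + poly h 1"
    obtain m0 where m0: "\<forall>y\<in>{0..1}. m0 \<le> poly h y"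
      using continuous_attains_inf[OF compact_Icc _ pc, of 0 1] by auto
    have "m0 \<le> poly h 1" using m0 by auto
    hence Kpos: "M - m0 + 1 > 0" using c0 by (simp add: M_def)
    define r where "r = min 1 (c / (M - m0 + 1))"
    have rpos: "r > 0" "r \<le> 1" using cpos Kpos by (auto simp: r_def)
    obtain R where R: "\<forall>x\<ge>R. poly h x \<ge> M + 1" using big by blast
    define R' where "R' = max R 1"
    have rR: "r \<le> R'" using rpos by (simp add: R'_def)
    let ?phi = "\<lambda>x. c / x + poly h x"
    have cont: "continuous_on {r..R'} ?phi"
      using rpos by (intro continuous_intros) auto
    obtain a where a: "a \<in> {r..R'}" "\<forall>y\<in>{r..R'}. ?phi a \<le> ?phi y"
      using continuous_attains_inf[OF compact_Icc _ cont] rR by auto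
    have phi1: "?phi 1 = M" by (simp add: M_def)
    have one: "1 \<in> {r..R'}" using rpos by (auto simp: R'_def)
    have aM: "?phi a \<le> M" using a(2) one phi1 by force
    have apos: "a > 0" using a rpos by auto
    have amin: "?phi a \<le> ?phi y" if "y > 0" for y
    proof -
      consider "y < r" | "y \<in> {r..R'}" | "y > R'" by force
      thus ?thesis
      proof cases
        case 1
        have "c / y \<ge> c / r" using 1 that cpos by (intro divide_left_mono) auto
        moreover have "c / r \<ge> M - m0 + 1"
        proof (cases "r = 1")
          case True
          hence "1 \<le> c / (M - m0 + 1)" using r_def by (metis min.absorb_iff1) 
          thus ?thesis using True Kpos by (simp add: le_divide_eq)
        next
          case False
          hence "r = c / (M - m0 + 1)" by (auto simp: r_def min_def split: if_splits)
          thus ?thesis using cpos Kpos by simp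
        qed
        moreover have "poly h y \<ge> m0" using m0 1 that rpos by auto
        ultimately show ?thesis using aM by simp
      next
        case 2 thus ?thesis using a by auto
      next
        case 3
        hence "poly h y \<ge> M + 1" using R by (auto simp: R'_def)
        moreover have "c / y \<ge> 0" using c0 that by simp
        ultimately show ?thesis using aM by simp
      qed
    qed
    define b where "b = ?phi a"
    have fa: "poly f a = b * a" using apos by (simp add: pf b_def field_simps)
    have b0: "b \<ge> 0"
    proof -
      have "0 \<le> poly f a" using fnn apos by simp
      thus ?thesis using fa apos by (simp add: zero_le_mult_iff)
    qed
    have lower: "b * x \<le> poly f x" if "x \<ge> 0" for x
    proof (cases "x = 0")
      case True thus ?thesis using c0 by (simp add: pf)
    next
      case False
      hence "x > 0" using that by simp
      hence "b * x \<le> ?phi x * x" using amin[of x] by (simp add: b_def mult_right_mono)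
      also have "\<dots> = poly f x" using \<open>x > 0\<close> by (simp add: pf field_simps)
      finally show ?thesis .
    qed
    have D: "DERIV ?phi a :> (- c / a^2 + poly (pderiv h) a)"
      using apos by (auto intro!: derivative_eq_intros poly_DERIV simp: power2_eq_square field_simps)
    have "- c / a^2 + poly (pderiv h) a = 0"
    proof (rule DERIV_local_min[OF D apos], intro allI impI)
      fix y assume "\<bar>a - y\<bar> < a"
      thus "?phi a \<le> ?phi y" using amin[of y] by auto
    qed
    hence "poly (pderiv h) a = c / a^2" by simp
    hence "poly (pderiv f) a = b" using apos by (simp add: pdf b_def power2_eq_square field_simps)
    thus ?thesis using apos b0 lower fa by (intro exI[where x=a, OF exI[where x=b]]) auto
  qed
qed




lemma decomp:
  fixes f :: "real poly"
  assumes deg: "degree f = Suc (Suc n)" and lc: "lead_coeff f = 1" and cop: "copositive f"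
  shows "\<exists>a b g. a \<ge> 0 \<and> b \<ge> 0 \<and> g \<in> Cop n \<and> f = [:- a, 1:]^2 * g + monom b 1"
proof -
  obtain a b where ab: "a \<ge> 0" "b \<ge> 0" "\<forall>x\<ge>0. b * x \<le> poly f x" "poly f a = b * a"
     "poly (pderiv f) a = b"
    using touch[OF assms] by blast
  define F where "F = f - monom b 1"
  have pF: "poly F x = poly f x - b * x" for x by (simp add: F_def poly_monom)
  have "poly F a = 0" using ab by (simp add: pF)
  moreover have "poly (pderiv F) a = 0"
    using ab by (simp add: F_def pderiv_diff pderiv_monom poly_monom)
  ultimately obtain g where g: "F = [:- a, 1:]^2 * g" using double_root by blast
  have e: "F = f + (- monom b 1)" by (simp add: F_def)
  have dm: "degree (- monom b 1 :: real poly) < Suc (Suc n)"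
    using le_less_trans[OF degree_monom_le[of b 1], of "Suc (Suc n)"] by simp
  have dF: "degree F = Suc (Suc n)" unfolding e using deg dm by (subst degree_add_eq_left) (auto simp del: degree_minus)
  have cF: "coeff F (Suc (Suc n)) = 1" using lc deg by (simp add: F_def coeff_monom)
  have g0: "g \<noteq> 0" using dF g by auto
  have dg: "degree g = n" using dF g g0 by (simp add: degree_mult_eq degree_power_eq)
  have lg: "lead_coeff g = 1"
  proof -
    have "lead_coeff F = 1" using dF cF by simp
    thus ?thesis using g by (simp add: lead_coeff_mult lead_coeff_power)
  qed
  have gpos: "poly g x \<ge> 0" if "x \<ge> 0" "x \<noteq> a" for x
  proof -
    have "0 \<le> poly F x" using ab(3) that by (simp add: pF)
    hence "0 \<le> (x - a)^2 * poly g x" by (simp add: g)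
    moreover have "(x - a)^2 > 0" using that by simp
    ultimately show ?thesis by (simp add: zero_le_mult_iff)
  qed
  have "copositive g" unfolding copositive_def
  proof (intro allI impI)
    fix x :: real assume x: "x \<ge> 0"
    show "poly g x \<ge> 0"
    proof (cases "x = a")
      case True
      show ?thesis unfolding True by (rule poly_nonneg_right) (use gpos ab in auto)
    qed (use gpos x in auto)
  qed
  hence "g \<in> Cop n" using dg lg by (simp add: Cop_def monic_deg_def)
  moreover have "f = [:- a, 1:]^2 * g + monom b 1" using g by (simp add: F_def)
  ultimately show ?thesis using ab by blast
qed

lemma surj_Phi: "f \<in> Cop d \<Longrightarrow> \<exists>t \<in> nonneg_orthant d. Phi d t = f"
proof (induction d arbitrary: f rule: less_induct)
  case (less d)
  have deg: "degree f = d" and lc: "lead_coeff f = 1" and cop: "copositive f"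
    using less.prems by (auto simp: Cop_def monic_deg_def)
  consider "d = 0" | "d = 1" | n where "d = Suc (Suc n)" by (metis One_nat_def not0_implies_Suc)
  then show ?case
  proof cases
    case 1
    have "f = 1" using deg lc degree_0_id[of f] 1 by (simp add: one_pCons)
    moreover have "(\<lambda>_. undefined) \<in> nonneg_orthant d" using 1 by (simp add: nonneg_orthant_def)
    ultimately show ?thesis using 1 by auto
  next
    case 2
    define c where "c = coeff f 0"
    have c0: "c \<ge> 0" using cop by (simp add: copositive_def c_def poly_0_coeff_0[symmetric])
    have fe: "f = [:c, 1:]"
    proof (rule poly_eqI)
      fix k show "coeff f k = coeff [:c, 1:] k"
        using deg lc 2 by (cases k) (auto simp: c_def coeff_eq_0 coeff_pCons split: nat.split)
    qed
    define t where "t = (\<lambda>i::nat. if i < 1 then c else undefined)"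
    have "t \<in> nonneg_orthant d" using 2 c0 by (auto simp: t_def nonneg_orthant_def PiE_def extensional_def)
    moreover have "Phi d t = f" using 2 fe by (simp add: t_def)
    ultimately show ?thesis by blast
  next
    case 3
    obtain a b g where abg: "a \<ge> 0" "b \<ge> 0" "g \<in> Cop n" "f = [:- a, 1:]^2 * g + monom b 1"
      using decomp[of f n] deg lc cop 3 by blast
    obtain s where s: "s \<in> nonneg_orthant n" "Phi n s = g" using less.IH[of n g] abg 3 by auto
    define t where "t = (\<lambda>i. if i < n then s i else if i = n then a else if i = Suc n then b else undefined)"
    have "t \<in> nonneg_orthant d" using 3 s abg
      by (auto simp: t_def nonneg_orthant_def PiE_def extensional_def Pi_def)
    moreover have "Phi n t = Phi n s" by (rule Phi_local) (simp add: t_def)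
    hence "Phi d t = f" using 3 s abg by (simp add: t_def)
    ultimately show ?thesis by blast
  qed
qed

theorem theorem1:
  fixes d :: nat
  shows "Phi d ` nonneg_orthant d \<subseteq> Cop d
    \<and> Phi d ` nonneg_orthant d = Cop d
    \<and> (\<exists>N. N \<in> null_sets (PiM {..<d} (\<lambda>_. lborel))
          \<and> inj_on (Phi d) (nonneg_orthant d - N))"
proof -
  have sub: "Phi d ` nonneg_orthant d \<subseteq> Cop d"
  proof
    fix f assume "f \<in> Phi d ` nonneg_orthant d"
    then obtain t where t: "t \<in> nonneg_orthant d" "f = Phi d t" by blast
    have tn: "\<And>i. i < d \<Longrightarrow> t i \<ge> 0" using t by (auto simp: nonneg_orthant_def PiE_def Pi_def)
    show "f \<in> Cop d" using Phi_monic[of d t] Phi_nonneg[OF tn] t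
      by (auto simp: Cop_def monic_deg_def copositive_def)
  qed
  moreover have "Cop d \<subseteq> Phi d ` nonneg_orthant d" using surj_Phi by blast
  moreover have "inj_on (Phi d) (nonneg_orthant d -
      (\<Union>i\<in>{..<d}. PiE {..<d} (\<lambda>j. if j = i then {0::real} else UNIV)))"
  proof (rule inj_onI)
    fix t s assume t: "t \<in> nonneg_orthant d - (\<Union>i\<in>{..<d}. PiE {..<d} (\<lambda>j. if j = i then {0::real} else UNIV))"
      and s: "s \<in> nonneg_orthant d - (\<Union>i\<in>{..<d}. PiE {..<d} (\<lambda>j. if j = i then {0::real} else UNIV))"
      and eq: "Phi d t = Phi d s"
    have pos: "u i > 0" if u: "u \<in> nonneg_orthant d - (\<Union>i\<in>{..<d}. PiE {..<d} (\<lambda>j. if j = i then {0::real} else UNIV))"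
      and i: "i < d" for u i
    proof -
      have "u \<in> PiE {..<d} (\<lambda>_. {0..})" using u by (simp add: nonneg_orthant_def)
      hence ge: "u i \<ge> 0" and ext: "u \<in> extensional {..<d}" using i by (auto simp: PiE_def Pi_def)
      have "u i \<noteq> 0"
      proof
        assume "u i = 0"
        hence "u \<in> PiE {..<d} (\<lambda>j. if j = i then {0::real} else UNIV)" using ext
          by (auto simp: PiE_def Pi_def)
        thus False using u i by auto
      qed
      thus ?thesis using ge by simp
    qed
    have "t i = s i" if "i < d" for i
      using Phi_inj[of d t s i] pos[OF t] pos[OF s] eq that by auto
    moreover have "t \<in> extensional {..<d}" "s \<in> extensional {..<d}"
      using t s by (auto simp: nonneg_orthant_def PiE_def)
    ultimately show "t = s" by (intro extensionalityI) auto
  qed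
  ultimately show ?thesis using null_N[of d] by blast
qed


end
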